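(* Let $\psi(x)=-2\pi\sin(2\pi x)$, $b\ge2$ an integer, $\gamma\in(1/b,1)$. Let $x^*\in[0,1/2]$ and $0\le k<l<b$ with $(k,l)\in E(1,x^* )$. Then for any $\kappa\in(0,1)$, either $$\Big|\cos\tfrac{2\pi(x^*+k)}{b}-\cos\tfrac{2\pi(x^*+l)}{b}\Big|\le\frac{2\gamma\sqrt{1-\kappa^2}}{b}+\frac{2\gamma^2}{b(b-\gamma)},$$ or $$\Big|\sin\tfrac{2\pi(x^*+k)}{b}-\sin\tfrac{2\pi(x^*+l)}{b}\Big|\le2\kappa\gamma+\frac{2\gamma^2}{1-\gamma}.$$
   Context: $\mathcal{A}=\{0,\dots,b-1\}$. $S(x,\mathbf{i})=\sum_{n\ge1}\gamma^{n-1}\psi\big(\frac{x+i_1+i_2b+\cdots+i_nb^{n-1}}{b^n}\big)$ for $\mathbf{i}\in\mathcal{A}^{\mathbb{Z}^+}$, $S'=\partial_xS$. Sequences $\mathbf{i},\mathbf{j}$ are $(\varepsilon,\delta)$-tangent at $x_0$ if $|S(x_0,\mathbf{i})-S(x_0,\mathbf{j})|\le\varepsilon$ and $|S'(x_0,\mathbf{i})-S'(x_0,\mathbf{j})|\le\delta$. $E(1,x_0;\varepsilon,\delta)$ is the set of pairs $(k,l)\in\mathcal{A}\times\mathcal{A}$ such that for some $\mathbf{u},\mathbf{v}\in\mathcal{A}^{\mathbb{Z}^+}$ the sequences $k\mathbf{u},l\mathbf{v}$ are $(\varepsilon,\delta)$-tangent at $x_0$; $E(1,x_0)=\bigcap_{\varepsilon,\delta>0}E(1,x_0;\varepsilon,\delta)$.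 *)

theory Defs
  imports "HOL-Analysis.Analysis"
begin

definition psi :: "real \<Rightarrow> real" where
  "psi x = - 2 * pi * sin (2 * pi * x)"

text \<open>Sequences in A^{Z+} are functions nat => nat; index m corresponds to i_{m+1}.
  S(x,i) = sum_{n>=1} gamma^(n-1) psi((x + i_1 + i_2 b + ... + i_n b^(n-1)) / b^n).\<close>
definition S :: "nat \<Rightarrow> real \<Rightarrow> (real \<Rightarrow> real) \<Rightarrow> real \<Rightarrow> (nat \<Rightarrow> nat) \<Rightarrow> real" where
  "S b \<gamma> \<psi> x i = (\<Sum>n. \<gamma> ^ n * \<psi> ((x + (\<Sum>m<Suc n. real (i m) * real b ^ m)) / real b ^ Suc n))"

definition S' :: "nat \<Rightarrow> real \<Rightarrow> (real \<Rightarrow> real) \<Rightarrow> real \<Rightarrow> (nat \<Rightarrow> nat) \<Rightarrow> real" where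
  "S' b \<gamma> \<psi> x i = deriv (\<lambda>y. S b \<gamma> \<psi> y i) x"

definition seqs :: "nat \<Rightarrow> (nat \<Rightarrow> nat) set" where
  "seqs b = {i. \<forall>n. i n < b}"

definition tangent :: "nat \<Rightarrow> real \<Rightarrow> (real \<Rightarrow> real) \<Rightarrow> real \<Rightarrow> real \<Rightarrow> real \<Rightarrow> (nat \<Rightarrow> nat) \<Rightarrow> (nat \<Rightarrow> nat) \<Rightarrow> bool" where
  "tangent b \<gamma> \<psi> \<epsilon> \<delta> x0 i j \<longleftrightarrow>
     \<bar>S b \<gamma> \<psi> x0 i - S b \<gamma> \<psi> x0 j\<bar> \<le> \<epsilon> \<and> \<bar>S' b \<gamma> \<psi> x0 i - S' b \<gamma> \<psi> x0 j\<bar> \<le> \<delta>"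

definition prepend :: "nat \<Rightarrow> (nat \<Rightarrow> nat) \<Rightarrow> (nat \<Rightarrow> nat)" where
  "prepend k u = case_nat k u"

definition E1_eps :: "nat \<Rightarrow> real \<Rightarrow> (real \<Rightarrow> real) \<Rightarrow> real \<Rightarrow> real \<Rightarrow> real \<Rightarrow> (nat \<times> nat) set" where
  "E1_eps b \<gamma> \<psi> x0 \<epsilon> \<delta> = {(k, l). k < b \<and> l < b \<and>
     (\<exists>u\<in>seqs b. \<exists>v\<in>seqs b. tangent b \<gamma> \<psi> \<epsilon> \<delta> x0 (prepend k u) (prepend l v))}"

definition E1 :: "nat \<Rightarrow> real \<Rightarrow> (real \<Rightarrow> real) \<Rightarrow> real \<Rightarrow> (nat \<times> nat) set" where
  "E1 b \<gamma> \<psi> x0 = (\<Inter>\<epsilon>\<in>{0<..}. \<Inter>\<delta>\<in>{0<..}. E1_eps b \<gamma> \<psi> x0 \<epsilon> \<delta>)"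

end

theory Submission
  imports Defs
begin

lemma geom_bound:
  fixes f :: "nat \<Rightarrow> real"
  assumes "\<And>n. \<bar>f n\<bar> \<le> C * q ^ n" "0 \<le> q" "q < 1"
  shows "summable f" "\<bar>suminf f\<bar> \<le> C / (1 - q)"
proof -
  have sg: "summable (\<lambda>n. C * q ^ n)" using assms by (intro summable_mult) simp
  show sf: "summable f"
    by (rule summable_comparison_test[OF _ sg]) (use assms(1) in auto)
  have sn: "summable (\<lambda>n. norm (f n))"
    by (rule summable_norm_comparison_test[OF _ sg]) (use assms(1) in auto)
  have "\<bar>suminf f\<bar> \<le> (\<Sum>n. norm (f n))" using summable_norm[OF sn] by simp
  also have "\<dots> \<le> (\<Sum>n. C * q ^ n)" by (rule suminf_le) (use assms(1) sn sg in auto)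
  also have "\<dots> = C / (1 - q)" using assms by (simp add: suminf_mult suminf_geometric)
  finally show "\<bar>suminf f\<bar> \<le> C / (1 - q)" .
qed

definition tt :: "nat \<Rightarrow> real \<Rightarrow> (nat \<Rightarrow> nat) \<Rightarrow> real \<Rightarrow> nat \<Rightarrow> real" where
  "tt b \<gamma> i x n = \<gamma> ^ n * psi ((x + (\<Sum>m<Suc n. real (i m) * real b ^ m)) / real b ^ Suc n)"

definition td :: "nat \<Rightarrow> real \<Rightarrow> (nat \<Rightarrow> nat) \<Rightarrow> real \<Rightarrow> nat \<Rightarrow> real" where
  "td b \<gamma> i x n = \<gamma> ^ n * (- 4 * pi^2 * cos (2 * pi * ((x + (\<Sum>m<Suc n. real (i m) * real b ^ m)) / real b ^ Suc n))) / real b ^ Suc n"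

lemma tt_deriv: 
  assumes "b \<ge> 1"
  shows "((\<lambda>x. tt b \<gamma> i x n) has_field_derivative td b \<gamma> i x n) (at x)"
    unfolding tt_def td_def psi_def
    using assms by (auto intro!: derivative_eq_intros simp: power2_eq_square field_simps)

lemma tt_bound: assumes "0 \<le> \<gamma>" shows "\<bar>tt b \<gamma> i x n\<bar> \<le> 2 * pi * \<gamma> ^ n"
proof -
  have "\<bar>psi y\<bar> \<le> 2 * pi" for y
    unfolding psi_def using abs_sin_le_one[of "2*pi*y"] pi_gt_zero
    by (simp add: abs_mult)
  then have h: "\<gamma> ^ n * \<bar>psi y\<bar> \<le> 2 * pi * \<gamma> ^ n" for y
    using mult_left_mono[of "\<bar>psi y\<bar>" "2*pi" "\<gamma>^n"] assms by (simp only: mult.commute zero_le_power)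
  show ?thesis unfolding tt_def abs_mult power_abs abs_of_nonneg[OF assms] by (rule h)
qed

lemma td_bound: assumes "0 \<le> \<gamma>" "b \<ge> 1" shows "\<bar>td b \<gamma> i x n\<bar> \<le> 4 * pi^2 * \<gamma> ^ n / real b ^ Suc n"
proof -
  have "\<bar>- 4 * pi^2 * cos y\<bar> \<le> 4 * pi^2" for y
    using abs_cos_le_one[of y] by (simp add: abs_mult)
  then have "\<gamma> ^ n * \<bar>- 4 * pi^2 * cos y\<bar> \<le> \<gamma> ^ n * (4 * pi^2)" for y
    using assms by (intro mult_left_mono) auto
  then have "\<bar>\<gamma> ^ n * (- 4 * pi^2 * cos y)\<bar> \<le> 4 * pi^2 * \<gamma> ^ n" for y
    using assms by (simp add: abs_mult mult.commute)
  then show ?thesis unfolding td_def using assms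
    by (simp add: divide_right_mono)
qed

lemma div_le_self_real: "0 \<le> (a::real) \<Longrightarrow> 1 \<le> d \<Longrightarrow> a / d \<le> a"
  using mult_left_mono[of 1 d a] by (simp add: divide_le_eq)

lemma S_eq: "S b \<gamma> psi x i = suminf (tt b \<gamma> i x)"
  unfolding S_def tt_def ..

lemma S'_eq:
  assumes "b \<ge> 1" "0 \<le> \<gamma>" "\<gamma> < 1"
  shows "summable (td b \<gamma> i x)" "S' b \<gamma> psi x i = suminf (td b \<gamma> i x)"
proof -
  have uc: "uniformly_convergent_on UNIV (\<lambda>n y. \<Sum>k<n. td b \<gamma> i y k)"
  proof (rule Weierstrass_m_test')
    fix n y
    have "\<bar>td b \<gamma> i y n\<bar> \<le> 4 * pi^2 * \<gamma> ^ n / real b ^ Suc n" by (rule td_bound) (use assms in auto)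
    also have "\<dots> \<le> 4 * pi^2 * \<gamma> ^ n" using assms
      by (intro div_le_self_real one_le_power) auto
    finally show "norm (td b \<gamma> i y n) \<le> 4 * pi^2 * \<gamma> ^ n" by simp
  next
    show "summable (\<lambda>n. 4 * pi^2 * \<gamma> ^ n)" using assms by (intro summable_mult) simp
  qed
  have st: "summable (\<lambda>n. tt b \<gamma> i x n)"
    by (rule geom_bound(1)[of _ "2*pi" \<gamma>]) (use assms tt_bound in auto)
  note D = has_field_derivative_series'[of UNIV "\<lambda>n y. tt b \<gamma> i y n" "\<lambda>n y. td b \<gamma> i y n", OF _ _ uc _ st]
  have D1: "((\<lambda>y. \<Sum>n. tt b \<gamma> i y n) has_field_derivative (\<Sum>n. td b \<gamma> i x n)) (at x)"
    using D(2) tt_deriv assms by auto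
  have "uniform_limit UNIV (\<lambda>n y. \<Sum>k<n. td b \<gamma> i y k) (\<lambda>y. \<Sum>k. td b \<gamma> i y k) sequentially"
    using uc by (simp add: uniformly_convergent_uniform_limit_iff suminf_eq_lim)
  show "summable (td b \<gamma> i x)"
  proof (rule summable_comparison_test[of _ "\<lambda>n. 4 * pi^2 * \<gamma> ^ n"])
    show "\<exists>N. \<forall>n\<ge>N. norm (td b \<gamma> i x n) \<le> 4 * pi\<^sup>2 * \<gamma> ^ n"
    proof (intro exI allI impI)
      fix n
      have "\<bar>td b \<gamma> i x n\<bar> \<le> 4 * pi^2 * \<gamma> ^ n / real b ^ Suc n" by (rule td_bound) (use assms in auto)
      also have "\<dots> \<le> 4 * pi^2 * \<gamma> ^ n" using assms
        by (intro div_le_self_real one_le_power) auto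
      finally show "norm (td b \<gamma> i x n) \<le> 4 * pi^2 * \<gamma> ^ n" by simp
    qed
    show "summable (\<lambda>n. 4 * pi^2 * \<gamma> ^ n)" using assms by (intro summable_mult) simp
  qed
  have "(\<lambda>y. S b \<gamma> psi y i) = (\<lambda>y. \<Sum>n. tt b \<gamma> i y n)" using S_eq by auto
  then show "S' b \<gamma> psi x i = suminf (td b \<gamma> i x)"
    unfolding S'_def using DERIV_imp_deriv[OF D1] by simp
qed

lemma decomp:
  assumes "b \<ge> 2" "0 \<le> \<gamma>" "\<gamma> < 1"
  obtains sv c T T' where "sv^2 + c^2 = 1" "\<bar>T\<bar> \<le> 2*pi*\<gamma>^2/(1-\<gamma>)"
    "\<bar>T'\<bar> \<le> 4*pi^2*\<gamma>^2/(real b^2*(real b-\<gamma>))"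
    "S b \<gamma> psi x i = -2*pi* sin(2*pi*(x + real (i 0))/real b) + \<gamma>*(-2*pi* sv) + T"
    "S' b \<gamma> psi x i = -(4*pi^2/real b)*cos(2*pi*(x + real (i 0))/real b) + \<gamma>/real b^2*(-4*pi^2*c) + T'"
proof -
  define \<theta> where "\<theta> = 2 * pi * ((x + (\<Sum>m<Suc 1. real (i m) * real b ^ m)) / real b ^ Suc 1)"
  have b1: "b \<ge> 1" and bpos: "real b > 0" using assms by auto
  have st: "summable (tt b \<gamma> i x)"
    by (rule geom_bound(1)[of _ "2*pi" \<gamma>]) (use assms tt_bound in auto)
  have sd: "summable (td b \<gamma> i x)" using S'_eq(1)[OF b1 assms(2,3)] .
  define T where "T = (\<Sum>n. tt b \<gamma> i x (n+2))"
  define T' where "T' = (\<Sum>n. td b \<gamma> i x (n+2))"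
  have e1: "S b \<gamma> psi x i = tt b \<gamma> i x 0 + tt b \<gamma> i x 1 + T"
    unfolding S_eq T_def using suminf_split_initial_segment[OF st, of 2] by (simp add: numeral_2_eq_2)
  have e2: "S' b \<gamma> psi x i = td b \<gamma> i x 0 + td b \<gamma> i x 1 + T'"
    unfolding S'_eq(2)[OF b1 assms(2,3)] T'_def using suminf_split_initial_segment[OF sd, of 2] by (simp add: numeral_2_eq_2)
  have t0: "tt b \<gamma> i x 0 = -2*pi* sin(2*pi*(x + real (i 0))/real b)"
    unfolding tt_def psi_def by simp
  have t1: "tt b \<gamma> i x 1 = \<gamma>*(-2*pi* sin \<theta>)"
    unfolding tt_def psi_def \<theta>_def by simp
  have d0: "td b \<gamma> i x 0 = -(4*pi^2/real b)*cos(2*pi*(x + real (i 0))/real b)"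
    unfolding td_def by simp
  have d1: "td b \<gamma> i x 1 = \<gamma>/real b^2*(-4*pi^2*cos \<theta>)"
    unfolding td_def \<theta>_def by (simp add: power2_eq_square)
  have bT: "\<bar>T\<bar> \<le> 2*pi*\<gamma>^2/(1-\<gamma>)"
    unfolding T_def
  proof (rule geom_bound(2))
    fix n
    show "\<bar>tt b \<gamma> i x (n+2)\<bar> \<le> (2*pi*\<gamma>^2) * \<gamma>^n"
      using tt_bound[OF assms(2), of b i x "n+2"] by (simp add: power_add power2_eq_square mult_ac)
  qed (use assms in auto)
  have bT': "\<bar>T'\<bar> \<le> (4*pi^2*\<gamma>^2/real b^3) / (1 - \<gamma>/real b)"
    unfolding T'_def
  proof (rule geom_bound(2))
    fix n
    have "4 * pi^2 * \<gamma> ^ (n+2) / real b ^ Suc (n+2) = (4*pi^2*\<gamma>^2/real b^3) * (\<gamma>/real b)^n"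
      by (simp add: power_add power_divide power2_eq_square power3_eq_cube field_simps)
    then show "\<bar>td b \<gamma> i x (n+2)\<bar> \<le> (4*pi^2*\<gamma>^2/real b^3) * (\<gamma>/real b)^n"
      using td_bound[OF assms(2) b1, of i x "n+2"] by simp
  qed (use assms bpos in auto)
  have eqb: "(4*pi^2*\<gamma>^2/real b^3) / (1 - \<gamma>/real b) = 4*pi^2*\<gamma>^2/(real b^2*(real b-\<gamma>))"
    using bpos assms by (simp add: field_simps power3_eq_cube power2_eq_square)
  have bT'': "\<bar>T'\<bar> \<le> 4*pi^2*\<gamma>^2/(real b^2*(real b-\<gamma>))" using bT' by (simp only: eqb)
  show ?thesis
    by (rule that[of "sin \<theta>" "cos \<theta>" T T']) (use e1 e2 t0 t1 d0 d1 bT bT'' in auto)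
qed

lemma jensen2:
  fixes sa ca sb cb \<kappa> :: real
  assumes "sa^2 + ca^2 = 1" "sb^2 + cb^2 = 1" "0 \<le> \<kappa>" "2*\<kappa> < \<bar>sa\<bar> + \<bar>sb\<bar>"
  shows "\<bar>ca\<bar> + \<bar>cb\<bar> \<le> 2 * sqrt (1 - \<kappa>^2)"
proof -
  have "(\<bar>ca\<bar> + \<bar>cb\<bar>)^2 \<le> 2*(ca^2 + cb^2)"
    using sum_squares_ge_zero[of "\<bar>ca\<bar> - \<bar>cb\<bar>" 0]
    by (simp add: power2_eq_square algebra_simps)
  also have "\<dots> = 4 - 2*(sa^2 + sb^2)" using assms by simp
  also have "\<dots> \<le> 4 - (\<bar>sa\<bar> + \<bar>sb\<bar>)^2"
    using sum_squares_ge_zero[of "\<bar>sa\<bar> - \<bar>sb\<bar>" 0]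
    by (simp add: power2_eq_square algebra_simps)
  also have "\<dots> \<le> 4 - (2*\<kappa>)^2"
    using assms(3,4) by (intro diff_left_mono power_mono) auto
  also have "\<dots> = 2^2 * (1 - \<kappa>^2)" by (simp add: power2_eq_square algebra_simps)
  finally have "\<bar>ca\<bar> + \<bar>cb\<bar> \<le> sqrt (2^2 * (1 - \<kappa>^2))" by (rule real_le_rsqrt)
  also have "\<dots> = 2 * sqrt (1 - \<kappa>^2)" by (subst real_sqrt_mult) simp
  finally show ?thesis .
qed

lemma absl:
  fixes p g a a' s1 s2 T U R e :: real
  assumes "p > 0" "g \<ge> 0" "\<bar>(-p*a + g*p*(-s1) + T) - (-p*a' + g*p*(-s2) + U)\<bar> \<le> e"
    "\<bar>T\<bar> \<le> p*R" "\<bar>U\<bar> \<le> p*R"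
  shows "\<bar>a - a'\<bar> \<le> e/p + g*(\<bar>s1\<bar>+\<bar>s2\<bar>) + 2*R"
proof -
  have eq: "p*(a - a') = -((-p*a + g*p*(-s1) + T) - (-p*a' + g*p*(-s2) + U)) - p*(g*(s1 - s2)) + (T - U)"
    by (simp add: algebra_simps)
  have "\<bar>g*(s1 - s2)\<bar> \<le> g*(\<bar>s1\<bar>+\<bar>s2\<bar>)"
    using assms(2) by (simp add: abs_mult mult_left_mono abs_triangle_ineq4)
  then have "\<bar>p*(g*(s1 - s2))\<bar> \<le> p*(g*(\<bar>s1\<bar>+\<bar>s2\<bar>))"
    using assms(1) by (simp add: abs_mult)
  then have "\<bar>p*(a - a')\<bar> \<le> e + p*(g*(\<bar>s1\<bar>+\<bar>s2\<bar>)) + 2*(p*R)"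
    unfolding eq using assms(3,4,5) by (smt (verit))
  moreover have "\<bar>p*(a - a')\<bar> = p*\<bar>a - a'\<bar>" using assms(1) by (simp add: abs_mult)
  moreover have "p*(e/p + g*(\<bar>s1\<bar>+\<bar>s2\<bar>) + 2*R) = e + p*(g*(\<bar>s1\<bar>+\<bar>s2\<bar>)) + 2*(p*R)"
    using assms(1) by (simp add: algebra_simps)
  ultimately have "p*\<bar>a - a'\<bar> \<le> p*(e/p + g*(\<bar>s1\<bar>+\<bar>s2\<bar>) + 2*R)"
    by simp
  then show ?thesis using assms(1) by simp
qed

theorem lemma4p1:
  fixes b k l :: nat and \<gamma> xs \<kappa> :: real
  assumes "b \<ge> 2"
    and "1 / real b < \<gamma>" and "\<gamma> < 1"
    and "0 \<le> xs" and "xs \<le> 1/2"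
    and "k < l" and "l < b"
    and "(k, l) \<in> E1 b \<gamma> psi xs"
    and "0 < \<kappa>" and "\<kappa> < 1"
  shows "\<bar>cos (2*pi*(xs + real k) / real b) - cos (2*pi*(xs + real l) / real b)\<bar>
           \<le> 2 * \<gamma> * sqrt (1 - \<kappa>^2) / real b + 2 * \<gamma>^2 / (real b * (real b - \<gamma>))
       \<or> \<bar>sin (2*pi*(xs + real k) / real b) - sin (2*pi*(xs + real l) / real b)\<bar>
           \<le> 2 * \<kappa> * \<gamma> + 2 * \<gamma>^2 / (1 - \<gamma>)"
proof (rule ccontr)
  let ?cA = "cos (2*pi*(xs + real k) / real b)" and ?cB = "cos (2*pi*(xs + real l) / real b)"
  let ?sA = "sin (2*pi*(xs + real k) / real b)" and ?sB = "sin (2*pi*(xs + real l) / real b)"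
  let ?RC = "2 * \<gamma> * sqrt (1 - \<kappa>^2) / real b + 2 * \<gamma>^2 / (real b * (real b - \<gamma>))"
  let ?RS = "2 * \<kappa> * \<gamma> + 2 * \<gamma>^2 / (1 - \<gamma>)"
  assume neg: "\<not> (\<bar>?cA - ?cB\<bar> \<le> ?RC \<or> \<bar>?sA - ?sB\<bar> \<le> ?RS)"
  have bpos: "real b > 0" and bge: "real b \<ge> 2" using assms(1) by auto
  have g0: "\<gamma> > 0" using assms(2) bpos by (smt (verit) divide_pos_pos)
  have gb: "\<gamma> < real b" using assms(3) bge by simp
  define gS where "gS = \<bar>?sA - ?sB\<bar> - ?RS"
  define gC where "gC = \<bar>?cA - ?cB\<bar> - ?RC"
  have gS: "gS > 0" and gC: "gC > 0" using neg unfolding gS_def gC_def by auto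
  define q where "q = 4*pi^2/real b"
  have q: "q > 0" unfolding q_def using bpos by simp
  define \<epsilon> where "\<epsilon> = pi * gS"
  define \<delta> where "\<delta> = q * gC / 2"
  have "\<epsilon> > 0" "\<delta> > 0" unfolding \<epsilon>_def \<delta>_def using gS gC q by auto
  then have "(k, l) \<in> E1_eps b \<gamma> psi xs \<epsilon> \<delta>" using assms(8) unfolding E1_def by auto
  then obtain u v where tg: "tangent b \<gamma> psi \<epsilon> \<delta> xs (prepend k u) (prepend l v)"
    unfolding E1_eps_def by auto
  have pk: "prepend k u 0 = k" "prepend l v 0 = l" by (simp_all add: prepend_def)
  obtain s1 c1 T1 T1' where D1: "s1^2 + c1^2 = 1" "\<bar>T1\<bar> \<le> 2*pi*\<gamma>^2/(1-\<gamma>)"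
    "\<bar>T1'\<bar> \<le> 4*pi^2*\<gamma>^2/(real b^2*(real b-\<gamma>))"
    "S b \<gamma> psi xs (prepend k u) = -2*pi* sin(2*pi*(xs + real k)/real b) + \<gamma>*(-2*pi* s1) + T1"
    "S' b \<gamma> psi xs (prepend k u) = -(4*pi^2/real b)*cos(2*pi*(xs + real k)/real b) + \<gamma>/real b^2*(-4*pi^2*c1) + T1'"
    using decomp[OF assms(1) less_imp_le[OF g0] assms(3), of xs "prepend k u"] unfolding pk by blast
  obtain s2 c2 T2 T2' where D2: "s2^2 + c2^2 = 1" "\<bar>T2\<bar> \<le> 2*pi*\<gamma>^2/(1-\<gamma>)"
    "\<bar>T2'\<bar> \<le> 4*pi^2*\<gamma>^2/(real b^2*(real b-\<gamma>))"
    "S b \<gamma> psi xs (prepend l v) = -2*pi* sin(2*pi*(xs + real l)/real b) + \<gamma>*(-2*pi* s2) + T2"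
    "S' b \<gamma> psi xs (prepend l v) = -(4*pi^2/real b)*cos(2*pi*(xs + real l)/real b) + \<gamma>/real b^2*(-4*pi^2*c2) + T2'"
    using decomp[OF assms(1) less_imp_le[OF g0] assms(3), of xs "prepend l v"] unfolding pk by blast
  have t1: "\<bar>S b \<gamma> psi xs (prepend k u) - S b \<gamma> psi xs (prepend l v)\<bar> \<le> \<epsilon>"
   and t2: "\<bar>S' b \<gamma> psi xs (prepend k u) - S' b \<gamma> psi xs (prepend l v)\<bar> \<le> \<delta>"
    using tg unfolding tangent_def by auto
  have sinb: "\<bar>?sA - ?sB\<bar> \<le> \<epsilon>/(2*pi) + \<gamma>*(\<bar>s1\<bar>+\<bar>s2\<bar>) + 2*(\<gamma>^2/(1-\<gamma>))"
  proof (rule absl[where p="2*pi" and g=\<gamma> and T=T1 and U=T2])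
    show "\<bar>(- (2*pi) * ?sA + \<gamma> * (2*pi) * - s1 + T1) - (- (2*pi) * ?sB + \<gamma> * (2*pi) * - s2 + T2)\<bar> \<le> \<epsilon>"
      using t1 unfolding D1(4) D2(4) by (simp add: algebra_simps)
    show "\<bar>T1\<bar> \<le> 2*pi*(\<gamma>^2/(1-\<gamma>))" "\<bar>T2\<bar> \<le> 2*pi*(\<gamma>^2/(1-\<gamma>))"
      using D1(2) D2(2) by simp_all
  qed (use g0 in auto)
  have qe: "\<gamma>/real b^2*(4*pi^2) = (\<gamma>/real b) * q" unfolding q_def using bpos
    by (simp add: power2_eq_square field_simps)
  have qR: "4*pi^2*\<gamma>^2/(real b^2*(real b-\<gamma>)) = q * (\<gamma>^2/(real b*(real b-\<gamma>)))"
    unfolding q_def using bpos by (simp add: power2_eq_square field_simps)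
  have cosb: "\<bar>?cA - ?cB\<bar> \<le> \<delta>/q + (\<gamma>/real b)*(\<bar>c1\<bar>+\<bar>c2\<bar>) + 2*(\<gamma>^2/(real b*(real b-\<gamma>)))"
  proof (rule absl[where p=q and g="\<gamma>/real b" and T=T1' and U=T2'])
    have "\<bar>(- q * ?cA + \<gamma>/real b * q * - c1 + T1') - (- q * ?cB + \<gamma>/real b * q * - c2 + T2')\<bar>
       = \<bar>S' b \<gamma> psi xs (prepend k u) - S' b \<gamma> psi xs (prepend l v)\<bar>"
      unfolding D1(5) D2(5) q_def[symmetric] using qe by (simp add: algebra_simps)
    then show "\<bar>(- q * ?cA + \<gamma>/real b * q * - c1 + T1') - (- q * ?cB + \<gamma>/real b * q * - c2 + T2')\<bar> \<le> \<delta>"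
      using t2 by simp
    show "\<bar>T1'\<bar> \<le> q*(\<gamma>^2/(real b*(real b-\<gamma>)))" "\<bar>T2'\<bar> \<le> q*(\<gamma>^2/(real b*(real b-\<gamma>)))"
      using D1(3) D2(3) qR by simp_all
  qed (use g0 q bpos in auto)
  show False
  proof (cases "\<bar>s1\<bar> + \<bar>s2\<bar> \<le> 2*\<kappa>")
    case True
    have "\<gamma>*(\<bar>s1\<bar>+\<bar>s2\<bar>) \<le> \<gamma>*(2*\<kappa>)" using True g0 by (intro mult_left_mono) auto
    moreover have "\<epsilon>/(2*pi) = gS/2" unfolding \<epsilon>_def by simp
    ultimately have "\<bar>?sA - ?sB\<bar> \<le> gS/2 + ?RS" using sinb by (simp add: algebra_simps)
    then show False using gS gS_def by linarith
  next
    case False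
    have "\<bar>c1\<bar> + \<bar>c2\<bar> \<le> 2 * sqrt (1 - \<kappa>^2)"
      by (rule jensen2[OF D1(1) D2(1)]) (use False assms(9) in auto)
    then have "(\<gamma>/real b)*(\<bar>c1\<bar>+\<bar>c2\<bar>) \<le> (\<gamma>/real b)*(2 * sqrt (1 - \<kappa>^2))"
      using g0 bpos by (intro mult_left_mono) auto
    moreover have "\<delta>/q = gC/2" unfolding \<delta>_def using q by simp
    moreover have "(\<gamma>/real b)*(2 * sqrt (1 - \<kappa>^2)) = 2 * \<gamma> * sqrt (1 - \<kappa>^2) / real b" by simp
    moreover have "2*(\<gamma>^2/(real b*(real b-\<gamma>))) = 2 * \<gamma>^2 / (real b * (real b - \<gamma>))" by simp
    ultimately have "\<bar>?cA - ?cB\<bar> \<le> gC/2 + ?RC" using cosb by linarith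
    then show False using gC gC_def by linarith
  qed
qed

end
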